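(* Conditionally on any realization of $\hat{\mathcal P}$, with probability at least $1-\delta/10$ over the perturbation $\xi$, simultaneously for every $\lambda\in\Lambda$ the empirical MDP $\hat M_{r_p+\lambda c}$ satisfies the $\iota$-gap condition with $\iota=\frac{\omega\delta(1-\gamma)}{30|\Lambda|SA^2}$.
   Context: Finite state set ($S$ states), finite action set ($A$ actions), discount $\gamma\in[0,1)$, empirical kernel $\hat{\mathcal P}$, reward $r$ and constraint reward $c$. $r_p=r+\xi$ where $\xi(s,a)\sim\mathrm{Uniform}[0,\omega]$ are i.i.d. and independent of $\hat{\mathcal P}$. $\Lambda=\{0,\varepsilon_l,2\varepsilon_l,\dots,U\}$ is a finite grid. $\hat M_g$ is the MDP with kernel $\hat{\mathcal P}$ and reward $g$, with optimal value and action-value functions $\hat V^*_g,\hat Q^*_g$ and optimal policy $\hat\pi^*_g$. $\iota$-gap condition: for every state $s$, $\hat V^*_g(s)-\max_{a\ne\hat\pi^*_g(s)}\hat Q^*_g(s,a)\ge\iota$, where $\hat\pi^*_g(s)=\arg\max_a\hat Q^*_g(s,a)$. *)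

theory Defs
  imports "HOL-Probability.Probability"
begin

text \<open>Finite MDP with state type 's and action type 'a (both finite).
  A kernel P s a s' is the transition probability; g s a is the reward.\<close>

definition stochastic_kernel :: "('s::finite \<Rightarrow> 'a::finite \<Rightarrow> 's \<Rightarrow> real) \<Rightarrow> bool" where
  "stochastic_kernel P \<longleftrightarrow> (\<forall>s a s'. 0 \<le> P s a s') \<and> (\<forall>s a. (\<Sum>s'\<in>UNIV. P s a s') = 1)"

definition bellman_opt ::
  "('s::finite \<Rightarrow> 'a::finite \<Rightarrow> 's \<Rightarrow> real) \<Rightarrow> real \<Rightarrow> ('s \<Rightarrow> 'a \<Rightarrow> real) \<Rightarrow> ('s \<Rightarrow> real) \<Rightarrow> 's \<Rightarrow> real" where
  "bellman_opt P \<gamma> g V s = Max (range (\<lambda>a. g s a + \<gamma> * (\<Sum>s'\<in>UNIV. P s a s' * V s')))"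

text \<open>Optimal value function: the (unique, for 0 <= gamma < 1) fixed point of the
  Bellman optimality operator.\<close>
definition opt_V ::
  "('s::finite \<Rightarrow> 'a::finite \<Rightarrow> 's \<Rightarrow> real) \<Rightarrow> real \<Rightarrow> ('s \<Rightarrow> 'a \<Rightarrow> real) \<Rightarrow> 's \<Rightarrow> real" where
  "opt_V P \<gamma> g = (THE V. V = bellman_opt P \<gamma> g V)"

definition opt_Q ::
  "('s::finite \<Rightarrow> 'a::finite \<Rightarrow> 's \<Rightarrow> real) \<Rightarrow> real \<Rightarrow> ('s \<Rightarrow> 'a \<Rightarrow> real) \<Rightarrow> 's \<Rightarrow> 'a \<Rightarrow> real" where
  "opt_Q P \<gamma> g s a = g s a + \<gamma> * (\<Sum>s'\<in>UNIV. P s a s' * opt_V P \<gamma> g s')"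

definition opt_pol ::
  "('s::finite \<Rightarrow> 'a::finite \<Rightarrow> 's \<Rightarrow> real) \<Rightarrow> real \<Rightarrow> ('s \<Rightarrow> 'a \<Rightarrow> real) \<Rightarrow> 's \<Rightarrow> 'a" where
  "opt_pol P \<gamma> g s = (SOME a. \<forall>b. opt_Q P \<gamma> g s b \<le> opt_Q P \<gamma> g s a)"

definition gap_condition ::
  "('s::finite \<Rightarrow> 'a::finite \<Rightarrow> 's \<Rightarrow> real) \<Rightarrow> real \<Rightarrow> ('s \<Rightarrow> 'a \<Rightarrow> real) \<Rightarrow> real \<Rightarrow> bool" where
  "gap_condition P \<gamma> g \<iota> \<longleftrightarrow>
     (\<forall>s a. a \<noteq> opt_pol P \<gamma> g s \<longrightarrow> opt_V P \<gamma> g s - opt_Q P \<gamma> g s a \<ge> \<iota>)"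

definition lam_grid :: "real \<Rightarrow> nat \<Rightarrow> real set" where
  "lam_grid \<epsilon> N = {real k * \<epsilon> | k. k \<le> N}"

definition perturb_measure :: "real \<Rightarrow> ('s::finite \<times> 'a::finite \<Rightarrow> real) measure" where
  "perturb_measure \<omega> = PiM UNIV (\<lambda>_. uniform_measure lborel {0..\<omega>})"

end

theory Submission
  imports Defs
begin


locale contr_op =
  fixes T :: "('s::finite \<Rightarrow> real) \<Rightarrow> 's \<Rightarrow> real" and \<gamma> :: real
  assumes T_mono: "(\<And>s. V s \<le> W s) \<Longrightarrow> T V s \<le> T W s"
    and T_shift: "T (\<lambda>s. V s + k) s = T V s + \<gamma> * k"
    and g0: "0 \<le> \<gamma>" and g1: "\<gamma> < 1"
begin

lemma T_contr:
  assumes "\<And>s'. \<bar>V s' - W s'\<bar> \<le> e"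
  shows "\<bar>T V s - T W s\<bar> \<le> \<gamma> * e"
proof -
  have "T V s \<le> T (\<lambda>s. W s + e) s" by (rule T_mono) (use assms in \<open>simp add: abs_le_iff\<close>, metis add.commute diff_le_eq)
  also have "\<dots> = T W s + \<gamma> * e" by (rule T_shift)
  finally have 1: "T V s \<le> T W s + \<gamma> * e" .
  have "T W s \<le> T (\<lambda>s. V s + e) s" by (rule T_mono) (use assms in \<open>simp add: abs_le_iff\<close>, metis add.commute diff_le_eq)
  also have "\<dots> = T V s + \<gamma> * e" by (rule T_shift)
  finally have 2: "T W s \<le> T V s + \<gamma> * e" .
  from 1 2 show ?thesis by linarith
qed

lemma sub_le_fix:
  assumes X: "\<And>s. X s \<le> T X s" and F: "\<And>s. F s = T F s"
  shows "X s \<le> F s"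
proof -
  define m where "m = Min (range (\<lambda>s. F s - X s))"
  have "m \<in> range (\<lambda>s. F s - X s)" unfolding m_def by (rule Min_in) auto
  then obtain s0 where s0: "m = F s0 - X s0" by auto
  have mle: "m \<le> F s - X s" for s unfolding m_def by (rule Min_le) auto
  have "X s + \<gamma> * m \<le> F s" for s
  proof -
    have "X s + \<gamma> * m \<le> T X s + \<gamma> * m" using X by simp
    also have "\<dots> = T (\<lambda>s. X s + m) s" by (rule T_shift[symmetric])
    also have "\<dots> \<le> T F s" by (rule T_mono) (use mle in \<open>force simp: algebra_simps\<close>)
    also have "\<dots> = F s" using F by simp
    finally show ?thesis .
  qed
  from this[of s0] s0 have gm: "\<gamma> * m \<le> m" by (metis add.commute le_diff_eq)
  have "0 \<le> (1-\<gamma>)*m" using gm by (simp add: algebra_simps)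
  then have "m \<ge> 0" using g1 by (simp add: zero_le_mult_iff)
  show ?thesis using mle[of s] \<open>m \<ge> 0\<close> by linarith
qed

lemma fix_le_super:
  assumes X: "\<And>s. T X s \<le> X s" and F: "\<And>s. F s = T F s"
  shows "F s \<le> X s"
proof -
  define m where "m = Min (range (\<lambda>s. X s - F s))"
  have "m \<in> range (\<lambda>s. X s - F s)" unfolding m_def by (rule Min_in) auto
  then obtain s0 where s0: "m = X s0 - F s0" by auto
  have mle: "m \<le> X s - F s" for s unfolding m_def by (rule Min_le) auto
  have "F s + \<gamma> * m \<le> X s" for s
  proof -
    have "F s + \<gamma> * m = T F s + \<gamma> * m" using F by simp
    also have "\<dots> = T (\<lambda>s. F s + m) s" by (rule T_shift[symmetric])
    also have "\<dots> \<le> T X s" by (rule T_mono) (use mle in \<open>force simp: algebra_simps\<close>)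
    also have "\<dots> \<le> X s" using X by simp
    finally show ?thesis .
  qed
  from this[of s0] s0 have gm: "\<gamma> * m \<le> m" by (metis add.commute le_diff_eq)
  have "0 \<le> (1-\<gamma>)*m" using gm by (simp add: algebra_simps)
  then have "m \<ge> 0" using g1 by (simp add: zero_le_mult_iff)
  show ?thesis using mle[of s] \<open>m \<ge> 0\<close> by linarith
qed

lemma fix_unique:
  assumes "\<And>s. F s = T F s" "\<And>s. G s = T G s" shows "F = G"
proof
  fix s show "F s = G s"
    using sub_le_fix[of F G s] fix_le_super[of F G s] assms by (simp add: order_antisym)
qed

lemma iter_bound:
  assumes F: "\<And>s. F s = T F s" and D: "\<And>s. \<bar>V0 s - F s\<bar> \<le> D"
  shows "\<bar>(T ^^ n) V0 s - F s\<bar> \<le> \<gamma> ^ n * D"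
proof (induction n arbitrary: s)
  case 0 then show ?case using D by simp
next
  case (Suc n)
  have "\<bar>T ((T ^^ n) V0) s - T F s\<bar> \<le> \<gamma> * (\<gamma> ^ n * D)"
    by (rule T_contr) (rule Suc)
  then show ?case using F[of s] by simp
qed

lemma iter_conv:
  assumes F: "\<And>s. F s = T F s"
  shows "(\<lambda>n. (T ^^ n) V0 s) \<longlonglongrightarrow> F s"
proof -
  define D where "D = (\<Sum>s\<in>UNIV. \<bar>V0 s - F s\<bar>)"
  have D: "\<bar>V0 s - F s\<bar> \<le> D" for s
    unfolding D_def by (rule member_le_sum) auto
  have "(\<lambda>n. \<gamma> ^ n * D) \<longlonglongrightarrow> 0 * D"
    by (intro tendsto_intros LIMSEQ_power_zero) (use g0 g1 in auto)
  then have lim0: "(\<lambda>n. \<gamma> ^ n * D) \<longlonglongrightarrow> 0" by simp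
  have "(\<lambda>n. (T ^^ n) V0 s - F s) \<longlonglongrightarrow> 0"
    by (rule Lim_null_comparison[OF _ lim0]) (use iter_bound[OF F D] in auto)
  then show ?thesis by (simp add: LIM_zero_iff)
qed

lemma fix_exists: "\<exists>F. \<forall>s. F s = T F s"
proof -
  define it where "it n = (T ^^ n) (\<lambda>_. 0)" for n
  define D where "D = (\<Sum>s\<in>UNIV. \<bar>it 1 s - it 0 s\<bar>)"
  have step: "\<bar>it (Suc n) s - it n s\<bar> \<le> \<gamma> ^ n * D" for n s
  proof (induction n arbitrary: s)
    case 0 then show ?case unfolding D_def by simp (rule member_le_sum[where f="\<lambda>s. \<bar>it (Suc 0) s - it 0 s\<bar>"], auto)
  next
    case (Suc n)
    have "\<bar>T (it (Suc n)) s - T (it n) s\<bar> \<le> \<gamma> * (\<gamma> ^ n * D)"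
      by (rule T_contr) (rule Suc)
    then show ?case unfolding it_def by simp
  qed
  have "\<exists>L. (\<lambda>n. it n s) \<longlonglongrightarrow> L" for s
  proof -
    have sm: "summable (\<lambda>n. it (Suc n) s - it n s)"
    proof (rule summable_comparison_test)
      show "\<exists>N. \<forall>n\<ge>N. norm (it (Suc n) s - it n s) \<le> \<gamma> ^ n * D" using step by auto
      show "summable (\<lambda>n. \<gamma> ^ n * D)"
        by (intro summable_mult2 summable_geometric) (use g0 g1 in auto)
    qed
    then obtain S where "(\<lambda>n. it (Suc n) s - it n s) sums S" by (auto simp: summable_def)
    then have "(\<lambda>n. \<Sum>k<n. it (Suc k) s - it k s) \<longlonglongrightarrow> S" by (simp add: sums_def)
    moreover have "(\<Sum>k<n. it (Suc k) s - it k s) = it n s - it 0 s" for n by (rule sum_lessThan_telescope)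
    ultimately have "(\<lambda>n. it n s - it 0 s) \<longlonglongrightarrow> S" by simp
    then have "(\<lambda>n. (it n s - it 0 s) + it 0 s) \<longlonglongrightarrow> S + it 0 s" by (intro tendsto_intros)
    then show ?thesis by auto
  qed
  then obtain L where L: "\<And>s. (\<lambda>n. it n s) \<longlonglongrightarrow> L s" by metis
  have "L s = T L s" for s
  proof -
    define e where "e n = (\<Sum>s\<in>UNIV. \<bar>it n s - L s\<bar>)" for n
    have e0: "e \<longlonglongrightarrow> 0"
    proof -
      have "e \<longlonglongrightarrow> (\<Sum>s::'s\<in>UNIV. \<bar>L s - L s\<bar>)"
        unfolding e_def by (intro tendsto_intros L)
      then show ?thesis by simp
    qed
    have "(\<lambda>n. T (it n) s - T L s) \<longlonglongrightarrow> 0"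
    proof (rule Lim_null_comparison)
      show "\<forall>\<^sub>F n in sequentially. norm (T (it n) s - T L s) \<le> \<gamma> * e n"
        by (intro always_eventually allI, simp, rule T_contr, unfold e_def, rule member_le_sum[where f="\<lambda>s. \<bar>it _ s - L s\<bar>"]) auto
      show "(\<lambda>n. \<gamma> * e n) \<longlonglongrightarrow> 0" using tendsto_mult_right_zero[OF e0] by simp
    qed
    then have "(\<lambda>n. T (it n) s) \<longlonglongrightarrow> T L s" by (simp add: LIM_zero_iff)
    moreover have "(\<lambda>n. T (it n) s) \<longlonglongrightarrow> L s"
      using LIMSEQ_Suc[OF L[of s]] unfolding it_def by simp
    ultimately show ?thesis using LIMSEQ_unique by blast
  qed
  then show ?thesis by blast
qed

definition "fp = (THE V. V = T V)"

lemma fp_fix: "fp s = T fp s"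
proof -
  obtain F where F: "\<And>s. F s = T F s" using fix_exists by blast
  have "F = T F" using F by auto
  moreover have "V = T V \<Longrightarrow> V = F" for V using fix_unique[of V F] F by metis
  ultimately have "fp = F" unfolding fp_def by (rule the_equality)
  then show ?thesis using F by simp
qed

lemma fp_the: "fp = (THE V. V = T V)" by (simp add: fp_def)

lemma fp_eqI: "(\<And>s. V s = T V s) \<Longrightarrow> fp = V"
  using fix_unique fp_fix by metis

end

locale mdp =
  fixes P :: "'s::finite \<Rightarrow> 'a::finite \<Rightarrow> 's \<Rightarrow> real" and \<gamma> :: real
  assumes stoch: "stochastic_kernel P" and g0: "0 \<le> \<gamma>" and g1: "\<gamma> < 1"
begin

definition Qf :: "('s \<Rightarrow> 'a \<Rightarrow> real) \<Rightarrow> ('s \<Rightarrow> real) \<Rightarrow> 's \<Rightarrow> 'a \<Rightarrow> real" where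
  "Qf g V s b = g s b + \<gamma> * (\<Sum>s'\<in>UNIV. P s b s' * V s')"

definition Tb :: "('s \<Rightarrow> 'a set) \<Rightarrow> ('s \<Rightarrow> 'a \<Rightarrow> real) \<Rightarrow> ('s \<Rightarrow> real) \<Rightarrow> 's \<Rightarrow> real" where
  "Tb A g V s = Max (Qf g V s ` A s)"

definition "fpA A g = contr_op.fp (Tb A g)"

lemma P_nonneg: "0 \<le> P s b s'" using stoch unfolding stochastic_kernel_def by auto
lemma P_sum: "(\<Sum>s'\<in>UNIV. P s b s') = 1" using stoch unfolding stochastic_kernel_def by auto

lemma Qf_mono: "(\<And>s. V s \<le> W s) \<Longrightarrow> Qf g V s b \<le> Qf g W s b"
  unfolding Qf_def using g0 P_nonneg
  by (auto intro!: mult_left_mono sum_mono)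

lemma Qf_shift: "Qf g (\<lambda>s. V s + k) s b = Qf g V s b + \<gamma> * k"
proof -
  have "(\<Sum>s'\<in>UNIV. P s b s' * (V s' + k)) = (\<Sum>s'\<in>UNIV. P s b s' * V s' + P s b s' * k)"
    by (simp add: distrib_left)
  also have "\<dots> = (\<Sum>s'\<in>UNIV. P s b s' * V s') + (\<Sum>s'\<in>UNIV. P s b s' * k)"
    by (rule sum.distrib)
  also have "(\<Sum>s'\<in>UNIV. P s b s' * k) = (\<Sum>s'\<in>UNIV. P s b s') * k"
    by (rule sum_distrib_right[symmetric])
  finally have "(\<Sum>s'\<in>UNIV. P s b s' * (V s' + k)) = (\<Sum>s'\<in>UNIV. P s b s' * V s') + (\<Sum>s'\<in>UNIV. P s b s') * k" .
  then show ?thesis unfolding Qf_def using P_sum by (simp add: algebra_simps)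
qed

lemma Max_shift: "finite X \<Longrightarrow> X \<noteq> {} \<Longrightarrow> Max ((\<lambda>b. f b + (c::real)) ` X) = Max (f ` X) + c"
proof -
  assume X: "finite X" "X \<noteq> {}"
  have "Max ((\<lambda>x. x + c) ` (f ` X)) = Max (f ` X) + c"
    by (rule mono_Max_commute[symmetric]) (use X in \<open>auto simp: mono_def\<close>)
  then show ?thesis by (simp add: image_image)
qed

lemma Max_img_mono:
  fixes f g :: "_ \<Rightarrow> real"
  shows "finite X \<Longrightarrow> X \<noteq> {} \<Longrightarrow> (\<And>x. x \<in> X \<Longrightarrow> f x \<le> g x) \<Longrightarrow> Max (f ` X) \<le> Max (g ` X)"
  by (rule Max.boundedI) (auto intro: order_trans[OF _ Max_ge])

lemma Tb_contr: assumes "\<And>s. A s \<noteq> {}" shows "contr_op (Tb A g) \<gamma>"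
proof
  fix V W :: "'s \<Rightarrow> real" and s
  assume "\<And>s. V s \<le> W s"
  then show "Tb A g V s \<le> Tb A g W s" unfolding Tb_def using assms
    by (intro Max_img_mono) (auto intro!: Qf_mono)
next
  fix V :: "'s \<Rightarrow> real" and k s
  show "Tb A g (\<lambda>s. V s + k) s = Tb A g V s + \<gamma> * k"
    unfolding Tb_def Qf_shift using Max_shift[of "A s" "Qf g V s" "\<gamma> * k"] assms by simp
qed (use g0 g1 in auto)

lemma fpA_fix: "(\<And>s. A s \<noteq> {}) \<Longrightarrow> fpA A g s = Tb A g (fpA A g) s"
  unfolding fpA_def using contr_op.fp_fix[OF Tb_contr] by blast

lemma fpA_eqI: "(\<And>s. A s \<noteq> {}) \<Longrightarrow> (\<And>s. V s = Tb A g V s) \<Longrightarrow> fpA A g = V"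
  unfolding fpA_def using contr_op.fp_eqI[OF Tb_contr] by blast

lemma sub_le_fpA: "(\<And>s. A s \<noteq> {}) \<Longrightarrow> (\<And>s. X s \<le> Tb A g X s) \<Longrightarrow> X s \<le> fpA A g s"
  using contr_op.sub_le_fix[OF Tb_contr] fpA_fix by blast

lemma fpA_le_super: "(\<And>s. A s \<noteq> {}) \<Longrightarrow> (\<And>s. Tb A g X s \<le> X s) \<Longrightarrow> fpA A g s \<le> X s"
  using contr_op.fix_le_super[OF Tb_contr] fpA_fix by blast

lemma bellman_Tb: "bellman_opt P \<gamma> g = Tb (\<lambda>_. UNIV) g"
  by (intro ext) (simp add: bellman_opt_def Tb_def Qf_def)

lemma opt_V_fpA: "opt_V P \<gamma> g = fpA (\<lambda>_. UNIV) g"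
proof -
  have "fpA (\<lambda>_. UNIV) g = (THE V. V = bellman_opt P \<gamma> g V)"
    using contr_op.fp_the[OF Tb_contr[of "\<lambda>_. UNIV" g]] unfolding fpA_def bellman_Tb by simp
  then show ?thesis unfolding opt_V_def by simp
qed

lemma opt_Q_Qf: "opt_Q P \<gamma> g s b = Qf g (opt_V P \<gamma> g) s b"
  unfolding opt_Q_def Qf_def by simp

lemma opt_V_Max: "opt_V P \<gamma> g s = Max (range (opt_Q P \<gamma> g s))"
  using fpA_fix[of "\<lambda>_. UNIV" g s] unfolding opt_V_fpA[symmetric] Tb_def opt_Q_Qf[abs_def] by simp

lemma opt_pol_max: "opt_Q P \<gamma> g s b \<le> opt_Q P \<gamma> g s (opt_pol P \<gamma> g s)"
proof -
  have "Max (range (opt_Q P \<gamma> g s)) \<in> range (opt_Q P \<gamma> g s)" by (rule Max_in) auto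
  then obtain p where p: "opt_Q P \<gamma> g s p = Max (range (opt_Q P \<gamma> g s))" by (metis rangeE)
  have "\<forall>b. opt_Q P \<gamma> g s b \<le> opt_Q P \<gamma> g s p" unfolding p by auto
  then have "\<forall>b. opt_Q P \<gamma> g s b \<le> opt_Q P \<gamma> g s (opt_pol P \<gamma> g s)"
    unfolding opt_pol_def by (rule someI)
  then show ?thesis by blast
qed

lemma opt_V_pol: "opt_V P \<gamma> g s = opt_Q P \<gamma> g s (opt_pol P \<gamma> g s)"
  unfolding opt_V_Max using opt_pol_max
  by (intro antisym Max.boundedI Max_ge) auto

lemma opt_Q_le: "opt_Q P \<gamma> g s b \<le> opt_V P \<gamma> g s"
  using opt_V_pol opt_pol_max by simp

lemma gap_char:
  assumes "\<iota> > 0"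
  shows "gap_condition P \<gamma> g \<iota> \<longleftrightarrow>
    (\<forall>s a b. a \<noteq> b \<longrightarrow> \<iota> \<le> opt_V P \<gamma> g s - opt_Q P \<gamma> g s a \<or> \<iota> \<le> opt_V P \<gamma> g s - opt_Q P \<gamma> g s b)"
  unfolding gap_condition_def
proof safe
  fix s a b assume H: "\<forall>s a. a \<noteq> opt_pol P \<gamma> g s \<longrightarrow> \<iota> \<le> opt_V P \<gamma> g s - opt_Q P \<gamma> g s a"
    and ab: "a \<noteq> b" and n: "\<not> \<iota> \<le> opt_V P \<gamma> g s - opt_Q P \<gamma> g s b"
  then show "\<iota> \<le> opt_V P \<gamma> g s - opt_Q P \<gamma> g s a" by metis
next
  fix s a assume H: "\<forall>s a b. a \<noteq> b \<longrightarrow> \<iota> \<le> opt_V P \<gamma> g s - opt_Q P \<gamma> g s a \<or> \<iota> \<le> opt_V P \<gamma> g s - opt_Q P \<gamma> g s b"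
    and a: "a \<noteq> opt_pol P \<gamma> g s"
  from H a have "\<iota> \<le> opt_V P \<gamma> g s - opt_Q P \<gamma> g s a \<or> \<iota> \<le> opt_V P \<gamma> g s - opt_Q P \<gamma> g s (opt_pol P \<gamma> g s)"
    by blast
  then show "\<iota> \<le> opt_V P \<gamma> g s - opt_Q P \<gamma> g s a" using opt_V_pol[of g s] assms by auto
qed


definition "Am s a = (\<lambda>_. UNIV)(s := - {a})"
definition "Aa s a = (\<lambda>_. UNIV)(s := {a})"

lemma Aa_ne: "Aa s a s' \<noteq> {}" unfolding Aa_def by auto
lemma Aa_contr: "contr_op (Tb (Aa s a) g) \<gamma>" by (rule Tb_contr) (rule Aa_ne)
lemma Aa_fix: "fpA (Aa s a) g s' = Tb (Aa s a) g (fpA (Aa s a) g) s'" by (rule fpA_fix) (rule Aa_ne)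
lemma Aa_sub: "(\<And>s. X s \<le> Tb (Aa s0 a) g X s) \<Longrightarrow> X s \<le> fpA (Aa s0 a) g s"
  by (rule sub_le_fpA) (rule Aa_ne)
lemma Am_ne: "b \<noteq> a \<Longrightarrow> Am s a s' \<noteq> {}" unfolding Am_def by auto

lemma Tb_Aa_s: "Tb (Aa s a) g V s = Qf g V s a" unfolding Tb_def Aa_def by simp
lemma Tb_Aa_other: "s' \<noteq> s \<Longrightarrow> Tb (Aa s a) g V s' = Tb (\<lambda>_. UNIV) g V s'"
  unfolding Tb_def Aa_def by simp
lemma Tb_Am_other: "s' \<noteq> s \<Longrightarrow> Tb (Am s a) g V s' = Tb (\<lambda>_. UNIV) g V s'"
  unfolding Tb_def Am_def by simp

lemma K1:
  assumes a: "a \<noteq> opt_pol P \<gamma> g s"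
    and lt: "opt_V P \<gamma> g s - opt_Q P \<gamma> g s a < \<iota>"
  shows "fpA (Am s a) g s - \<iota> / (1 - \<gamma>) \<le> fpA (Aa s a) g s \<and> fpA (Aa s a) g s \<le> fpA (Am s a) g s"
proof -
  let ?V = "opt_V P \<gamma> g"
  let ?p = "opt_pol P \<gamma> g s"
  have Vfix: "?V s' = Tb (\<lambda>_. UNIV) g ?V s'" for s'
    using fpA_fix[of "\<lambda>_. UNIV" g s'] unfolding opt_V_fpA by simp
  have ne: "Am s a s' \<noteq> {}" for s' using Am_ne[OF a[symmetric]] .
  have "opt_pol P \<gamma> g s \<in> - {a}" using a by auto
  have U: "fpA (Am s a) g = ?V"
  proof (rule fpA_eqI[OF ne])
    fix s'
    show "?V s' = Tb (Am s a) g ?V s'"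
    proof (cases "s' = s")
      case True
      have "Tb (Am s a) g ?V s = Max (Qf g ?V s ` (- {a}))" unfolding Tb_def Am_def by simp
      also have "\<dots> = ?V s"
      proof (rule antisym)
        show "Max (Qf g ?V s ` (- {a})) \<le> ?V s"
        proof (rule Max.boundedI)
          show "Qf g ?V s ` (- {a}) \<noteq> {}" using \<open>opt_pol P \<gamma> g s \<in> - {a}\<close> by blast
        qed (use opt_Q_le[of g s] in \<open>auto simp: opt_Q_Qf\<close>)
        show "?V s \<le> Max (Qf g ?V s ` (- {a}))"
          using opt_V_pol[of g s] a by (intro Max_ge_iff[THEN iffD2]) (auto simp: opt_Q_Qf)
      qed
      finally show ?thesis using True by simp
    next
      case False then show ?thesis using Tb_Am_other Vfix by simp
    qed
  qed
  have W_le: "fpA (Aa s a) g s' \<le> ?V s'" for s'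
    unfolding opt_V_fpA
  proof (rule sub_le_fpA)
    fix s''
    have "fpA (Aa s a) g s'' = Tb (Aa s a) g (fpA (Aa s a) g) s''" by (rule Aa_fix)
    also have "\<dots> \<le> Tb (\<lambda>_. UNIV) g (fpA (Aa s a) g) s''"
      unfolding Tb_def by (rule Max_mono) (auto simp: Aa_def)
    finally show "fpA (Aa s a) g s'' \<le> Tb (\<lambda>_. UNIV) g (fpA (Aa s a) g) s''" .
  qed simp
  have Qle: "opt_Q P \<gamma> g s a \<le> ?V s" by (rule opt_Q_le)
  with lt have ipos: "\<iota> > 0" by simp
  define c where "c = \<iota> / (1 - \<gamma>)"
  have c0: "c \<ge> 0" unfolding c_def using ipos g1 by simp
  have "(1 - \<gamma>) * c = \<iota>" unfolding c_def using g1 by simp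
  then have cg: "c - \<gamma> * c = \<iota>" by (simp add: algebra_simps)
  interpret Ta: contr_op "Tb (Aa s a) g" \<gamma> by (rule Aa_contr)
  have "?V s - c \<le> fpA (Aa s a) g s"
  proof (rule Aa_sub[of "\<lambda>s'. ?V s' - c"])
    fix s'
    have sh: "Tb (Aa s a) g (\<lambda>s'. ?V s' - c) s' = Tb (Aa s a) g ?V s' - \<gamma> * c"
      using Ta.T_shift[of ?V "-c" s'] by simp
    show "?V s' - c \<le> Tb (Aa s a) g (\<lambda>s'. ?V s' - c) s'"
    proof (cases "s' = s")
      case True
      have "Tb (Aa s a) g ?V s = opt_Q P \<gamma> g s a" unfolding Tb_Aa_s opt_Q_Qf ..
      then show ?thesis using True sh lt cg by simp
    next
      case False
      then have "Tb (Aa s a) g ?V s' = ?V s'" using Tb_Aa_other Vfix by simp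
      moreover have "\<gamma>*c \<le> c" using mult_left_le_one_le[of c \<gamma>] c0 g0 g1 by simp
      ultimately show ?thesis using sh by simp
    qed
  qed
  then show ?thesis using U W_le unfolding c_def by simp
qed

lemma K2:
  assumes gs: "g' s a = g s a + d" and d: "d \<ge> 0"
    and go: "\<And>s' b. (s', b) \<noteq> (s, a) \<Longrightarrow> g' s' b = g s' b"
  shows "fpA (Am s a) g' = fpA (Am s a) g" and "fpA (Aa s a) g s + d \<le> fpA (Aa s a) g' s"
proof -
  have "Tb (Am s a) g' = Tb (Am s a) g"
  proof (intro ext)
    fix V s'
    have "Qf g' V s' b = Qf g V s' b" if "b \<in> Am s a s'" for b
      using that go[of s' b] unfolding Qf_def Am_def by (cases "s' = s") auto
    then show "Tb (Am s a) g' V s' = Tb (Am s a) g V s'" unfolding Tb_def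
      by (metis (no_types, lifting) image_cong)
  qed
  then show "fpA (Am s a) g' = fpA (Am s a) g" unfolding fpA_def by simp
next
  let ?W = "fpA (Aa s a) g"
  define X where "X = ?W(s := ?W s + d)"
  have XW: "?W s' \<le> X s'" for s' unfolding X_def using d by auto
  have "X s \<le> fpA (Aa s a) g' s"
  proof (rule Aa_sub)
    fix s'
    have m: "Tb (Aa s a) g' ?W s' \<le> Tb (Aa s a) g' X s'"
      using contr_op.T_mono[OF Aa_contr] XW by blast
    show "X s' \<le> Tb (Aa s a) g' X s'"
    proof (cases "s' = s")
      case True
      have "Tb (Aa s a) g' ?W s = Qf g' ?W s a" by (rule Tb_Aa_s)
      also have "\<dots> = Qf g ?W s a + d" unfolding Qf_def gs by simp
      also have "\<dots> = ?W s + d" using Aa_fix[of s a g s] Tb_Aa_s by simp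
      finally show ?thesis using m True unfolding X_def by simp
    next
      case False
      have "Tb (Aa s a) g' ?W s' = Tb (Aa s a) g ?W s'"
        unfolding Tb_Aa_other[OF False] Tb_def Qf_def using go False by simp
      also have "\<dots> = ?W s'" using Aa_fix[of s a g s'] by simp
      finally show ?thesis using m False unfolding X_def by simp
    qed
  qed
  then show "fpA (Aa s a) g s + d \<le> fpA (Aa s a) g' s" unfolding X_def by simp
qed

end


context mdp begin

lemma fpA_measurable:
  assumes ne: "\<And>s. A s \<noteq> {}"
    and G: "\<And>s b. (\<lambda>x. G x s b) \<in> borel_measurable N"
  shows "(\<lambda>x. fpA A (G x) s) \<in> borel_measurable N"
proof -
  define it where "it n x = (Tb A (G x) ^^ n) (\<lambda>_. 0)" for n x
  have m: "(\<lambda>x. it n x s) \<in> borel_measurable N" for n s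
  proof (induction n arbitrary: s)
    case 0 then show ?case unfolding it_def by simp
  next
    case (Suc n)
    have "(\<lambda>x. Max ((\<lambda>b. Qf (G x) (it n x) s b) ` A s)) \<in> borel_measurable N"
    proof (rule borel_measurable_Max)
      fix b
      show "(\<lambda>x. Qf (G x) (it n x) s b) \<in> borel_measurable N"
        unfolding Qf_def using Suc G by measurable
    qed simp
    then show ?case unfolding it_def Tb_def by simp
  qed
  show ?thesis
  proof (rule borel_measurable_LIMSEQ_real[OF _ m])
    fix x
    show "(\<lambda>n. it n x s) \<longlonglongrightarrow> fpA A (G x) s"
    proof -
      have c: "contr_op (Tb A (G x)) \<gamma>" by (rule Tb_contr) (rule ne)
      have F: "\<And>s. fpA A (G x) s = Tb A (G x) (fpA A (G x)) s" by (rule fpA_fix) (rule ne)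
      show ?thesis unfolding it_def by (rule contr_op.iter_conv[OF c F])
    qed
  qed
qed

end


lemma prob_Mi: "0 < \<omega> \<Longrightarrow> prob_space (uniform_measure lborel {0..\<omega>::real})"
  by (rule prob_space_uniform_measure) auto

lemma coord_meas:
  assumes "0 < \<omega>"
  shows "(\<lambda>\<xi>. \<xi> i) \<in> borel_measurable (perturb_measure \<omega>)"
proof -
  have "(\<lambda>\<xi>. \<xi> i) \<in> measurable (perturb_measure \<omega>) (uniform_measure lborel {0..\<omega>})"
    unfolding perturb_measure_def by (rule measurable_component_singleton) simp
  moreover have "(\<lambda>x. x) \<in> measurable (uniform_measure lborel {0..\<omega>}) (borel :: real measure)"
    by (rule measurable_ident_sets) simp
  ultimately show ?thesis by (rule measurable_compose)
qed

lemma space_perturb: "space (perturb_measure \<omega>) = UNIV"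
  unfolding perturb_measure_def space_PiM by (auto simp: PiE_def extensional_def)

context mdp begin

lemma E_bound:
  fixes r cc :: "'s \<Rightarrow> 'a \<Rightarrow> real" and l \<omega> \<kappa> :: real and s :: 's and a b :: 'a
  assumes om: "0 < \<omega>" and ka: "0 \<le> \<kappa>" and ba: "b \<noteq> a"
  defines "g \<equiv> \<lambda>\<xi> s' b'. r s' b' + \<xi> (s', b') + l * cc s' b'"
  defines "E \<equiv> {\<xi> \<in> space (perturb_measure \<omega>). fpA (Am s a) (g \<xi>) s - \<kappa> \<le> fpA (Aa s a) (g \<xi>) s
                  \<and> fpA (Aa s a) (g \<xi>) s \<le> fpA (Am s a) (g \<xi>) s}"
  shows "E \<in> sets (perturb_measure \<omega>)" and "emeasure (perturb_measure \<omega>) E \<le> ennreal (2 * \<kappa> / \<omega>)"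
proof -
  let ?Mi = "uniform_measure lborel {0..\<omega>}"
  let ?i = "(s, a)"
  have gm: "(\<lambda>\<xi>. g \<xi> s' b') \<in> borel_measurable (perturb_measure \<omega>)" for s' b'
    unfolding g_def using coord_meas[OF om] by measurable
  have Um: "(\<lambda>\<xi>. fpA (Am s a) (g \<xi>) s) \<in> borel_measurable (perturb_measure \<omega>)"
    by (rule fpA_measurable[OF Am_ne[OF ba] gm])
  have Wm: "(\<lambda>\<xi>. fpA (Aa s a) (g \<xi>) s) \<in> borel_measurable (perturb_measure \<omega>)"
    by (rule fpA_measurable[OF Aa_ne gm])
  show Es: "E \<in> sets (perturb_measure \<omega>)" using Um Wm unfolding E_def by (intro sets.sets_Collect_conj borel_measurable_le borel_measurable_diff) simp_all
  interpret Mi: prob_space ?Mi by (rule prob_Mi[OF om])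
  interpret PS: product_prob_space "\<lambda>_. ?Mi"
    by (intro product_prob_spaceI) (rule prob_Mi[OF om])
  have sec: "y2 - y1 \<le> \<kappa>" if "x(?i := y1) \<in> E" "x(?i := y2) \<in> E" "y1 \<le> y2" for x y1 y2
  proof -
    have k: "fpA (Am s a) (g (x(?i := y2))) = fpA (Am s a) (g (x(?i := y1)))"
      and w: "fpA (Aa s a) (g (x(?i := y1))) s + (y2 - y1) \<le> fpA (Aa s a) (g (x(?i := y2))) s"
      by (rule K2[where d="y2 - y1"], (auto simp: g_def that))+
    show ?thesis using that k w unfolding E_def by auto
  qed
  have inner: "(\<integral>\<^sup>+ y. indicator E (x(?i := y)) \<partial>?Mi) \<le> ennreal (2 * \<kappa> / \<omega>)" for x
  proof (cases "\<exists>y0. x(?i := y0) \<in> E")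
    case False
    then have "(\<integral>\<^sup>+ y. indicator E (x(?i := y)) \<partial>?Mi) = (\<integral>\<^sup>+ y. 0 \<partial>?Mi)"
      by (intro nn_integral_cong) (auto simp: indicator_def)
    then show ?thesis by simp
  next
    case True
    then obtain y0 where y0: "x(?i := y0) \<in> E" by blast
    have "(\<integral>\<^sup>+ y. indicator E (x(?i := y)) \<partial>?Mi) \<le> (\<integral>\<^sup>+ y. indicator {y0 - \<kappa> .. y0 + \<kappa>} y \<partial>?Mi)"
    proof (rule nn_integral_mono)
      fix y
      show "indicator E (x(?i := y)) \<le> (indicator {y0 - \<kappa> .. y0 + \<kappa>} y :: ennreal)"
      proof (cases "x(?i := y) \<in> E")
        case True
        have "\<bar>y - y0\<bar> \<le> \<kappa>"
        proof (cases "y0 \<le> y")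
          case True then show ?thesis using sec[OF y0 \<open>x(?i := y) \<in> E\<close>] by simp
        next
          case False then show ?thesis using sec[OF \<open>x(?i := y) \<in> E\<close> y0] by simp
        qed
        then show ?thesis using True by (auto simp: indicator_def abs_le_iff)
      qed (simp add: indicator_def)
    qed
    also have "\<dots> = emeasure ?Mi {y0 - \<kappa> .. y0 + \<kappa>}" by (simp add: nn_integral_indicator)
    also have "\<dots> = emeasure lborel ({0..\<omega>} \<inter> {y0 - \<kappa> .. y0 + \<kappa>}) / emeasure lborel {0..\<omega>}"
      by (rule emeasure_uniform_measure) auto
    also have "\<dots> \<le> emeasure lborel {y0 - \<kappa> .. y0 + \<kappa>} / emeasure lborel {0..\<omega>}"
      by (intro divide_right_mono_ennreal emeasure_mono) auto
    also have "\<dots> = ennreal (2 * \<kappa>) / ennreal \<omega>" using ka om by simp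
    also have "\<dots> = ennreal (2 * \<kappa> / \<omega>)" using ka om by (simp add: divide_ennreal)
    finally show ?thesis .
  qed
  have UNIVeq: "(UNIV :: ('s \<times> 'a) set) = insert ?i (UNIV - {?i})" by auto
  have "emeasure (perturb_measure \<omega>) E = (\<integral>\<^sup>+ \<xi>. indicator E \<xi> \<partial>perturb_measure \<omega>)"
    using Es by (simp add: nn_integral_indicator)
  also have "\<dots> = (\<integral>\<^sup>+ \<xi>. indicator E \<xi> \<partial>PiM (insert ?i (UNIV - {?i})) (\<lambda>_. ?Mi))"
    unfolding perturb_measure_def using UNIVeq by simp
  also have "\<dots> = (\<integral>\<^sup>+ x. (\<integral>\<^sup>+ y. indicator E (x(?i := y)) \<partial>?Mi) \<partial>PiM (UNIV - {?i}) (\<lambda>_. ?Mi))"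
  proof (rule PS.product_nn_integral_insert)
    show "indicator E \<in> borel_measurable (PiM (insert ?i (UNIV - {?i})) (\<lambda>_. ?Mi))"
      using Es UNIVeq unfolding perturb_measure_def by (metis borel_measurable_indicator)
  qed auto
  also have "\<dots> \<le> (\<integral>\<^sup>+ x. ennreal (2 * \<kappa> / \<omega>) \<partial>PiM (UNIV - {?i}) (\<lambda>_. ?Mi))"
    by (intro nn_integral_mono inner)
  also have "\<dots> = ennreal (2 * \<kappa> / \<omega>)"
  proof -
    interpret PJ: prob_space "PiM (UNIV - {?i}) (\<lambda>_. ?Mi)"
      by (rule prob_space_PiM) (rule prob_Mi[OF om])
    show ?thesis by (simp add: PJ.emeasure_space_1)
  qed
  finally show "emeasure (perturb_measure \<omega>) E \<le> ennreal (2 * \<kappa> / \<omega>)" .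
qed

end


lemma lam_grid_finite: "finite (lam_grid \<epsilon> N)" and lam_grid_0: "0 \<in> lam_grid \<epsilon> N"
proof -
  have "lam_grid \<epsilon> N = (\<lambda>k. real k * \<epsilon>) ` {..N}" unfolding lam_grid_def by auto
  then show "finite (lam_grid \<epsilon> N)" by simp
  show "0 \<in> lam_grid \<epsilon> N" unfolding lam_grid_def by force
qed

theorem mainTheorem12:
  fixes P :: "'s::finite \<Rightarrow> 'a::finite \<Rightarrow> 's \<Rightarrow> real"
    and r c :: "'s \<Rightarrow> 'a \<Rightarrow> real"
    and \<gamma> \<omega> \<delta> \<epsilon> :: real and N :: nat
  assumes "stochastic_kernel P"
    and "0 \<le> \<gamma>" and "\<gamma> < 1"
    and "0 < \<omega>"
    and "0 < \<delta>" and "\<delta> < 1"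
    and "0 < \<epsilon>"
  shows "measure (perturb_measure \<omega>)
           {\<xi> \<in> space (perturb_measure \<omega>).
              \<forall>l\<in>lam_grid \<epsilon> N.
                gap_condition P \<gamma> (\<lambda>s a. r s a + \<xi> (s, a) + l * c s a)
                  (\<omega> * \<delta> * (1 - \<gamma>) /
                   (30 * real (card (lam_grid \<epsilon> N)) * real CARD('s) * real CARD('a) ^ 2))}
         \<ge> 1 - \<delta> / 10"
proof -
  interpret mdp P \<gamma> by unfold_locales (use assms in auto)
  define L where "L = lam_grid \<epsilon> N"
  define \<iota> where "\<iota> = \<omega> * \<delta> * (1 - \<gamma>) / (30 * real (card L) * real CARD('s) * real CARD('a) ^ 2)"
  define \<kappa> where "\<kappa> = \<iota> / (1 - \<gamma>)"
  define g where "g \<xi> l = (\<lambda>s a. r s a + \<xi> (s, a) + l * c s a)" for \<xi> :: "'s \<times> 'a \<Rightarrow> real" and l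
  define M where "M = (perturb_measure \<omega> :: ('s \<times> 'a \<Rightarrow> real) measure)"
  have finL: "finite L" unfolding L_def by (rule lam_grid_finite)
  have cardL: "card L \<ge> 1" using finL lam_grid_0[of \<epsilon> N] unfolding L_def
    by (metis One_nat_def Suc_leI card_gt_0_iff empty_iff)
  have S1: "real CARD('s) \<ge> 1" and A1: "real CARD('a) \<ge> 1"
    by (simp_all add: Suc_leI)
  have den: "30 * real (card L) * real CARD('s) * real CARD('a) ^ 2 > 0"
    using cardL S1 A1 by simp
  have ipos: "\<iota> > 0" unfolding \<iota>_def using den assms by simp
  have ka: "\<kappa> \<ge> 0" unfolding \<kappa>_def using ipos assms by simp
  have kaeq: "\<kappa> = \<omega> * \<delta> / (30 * real (card L) * real CARD('s) * real CARD('a) ^ 2)"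
    unfolding \<kappa>_def \<iota>_def using assms by simp
  interpret M: prob_space M unfolding M_def perturb_measure_def
    by (rule prob_space_PiM) (rule prob_Mi[OF assms(4)])
  define I where "I = L \<times> (UNIV :: 's set) \<times> {a :: 'a. \<exists>b. b \<noteq> a}"
  define E where "E = (\<lambda>(l, s :: 's, a :: 'a). {\<xi> \<in> space M. fpA (Am s a) (g \<xi> l) s - \<kappa> \<le> fpA (Aa s a) (g \<xi> l) s
                  \<and> fpA (Aa s a) (g \<xi> l) s \<le> fpA (Am s a) (g \<xi> l) s})"
  have finI: "finite I" unfolding I_def using finL by simp
  have EI: "E j \<in> sets M \<and> measure M (E j) \<le> 2 * \<kappa> / \<omega>" if jI: "j \<in> I" for j
  proof -
    obtain l s a where j: "j = (l, s, a)" by (cases j) auto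
    obtain b where ba: "b \<noteq> a" using jI j unfolding I_def by auto
    note EB = E_bound[where r=r and l=l and cc=c and s=s, OF assms(4) ka ba]
    have Ej: "E j = {\<xi> \<in> space (perturb_measure \<omega>).
        fpA (Am s a) (\<lambda>s' b'. r s' b' + \<xi> (s', b') + l * c s' b') s - \<kappa> \<le> fpA (Aa s a) (\<lambda>s' b'. r s' b' + \<xi> (s', b') + l * c s' b') s \<and>
        fpA (Aa s a) (\<lambda>s' b'. r s' b' + \<xi> (s', b') + l * c s' b') s \<le> fpA (Am s a) (\<lambda>s' b'. r s' b' + \<xi> (s', b') + l * c s' b') s}"
      unfolding E_def j g_def M_def by simp
    have "emeasure M (E j) \<le> ennreal (2 * \<kappa> / \<omega>)" using EB(2) unfolding Ej M_def .
    moreover have "E j \<in> sets M" using EB(1) unfolding Ej M_def .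
    ultimately show ?thesis using M.emeasure_eq_measure ka assms(4)
      by (simp add: ennreal_le_iff)
  qed
  define G where "G = {\<xi> \<in> space M. \<forall>l\<in>L. gap_condition P \<gamma> (g \<xi> l) \<iota>}"
  have Gm: "G \<in> sets M"
  proof -
    have gm: "(\<lambda>\<xi>. g \<xi> l s' b') \<in> borel_measurable M" for l s' b'
      unfolding g_def M_def using coord_meas[OF assms(4)] by measurable
    have Vm[measurable]: "(\<lambda>\<xi>. opt_V P \<gamma> (g \<xi> l) s) \<in> borel_measurable M" for l s
      unfolding opt_V_fpA by (rule fpA_measurable[OF _ gm]) simp
    have Qm[measurable]: "(\<lambda>\<xi>. opt_Q P \<gamma> (g \<xi> l) s a) \<in> borel_measurable M" for l s a
      unfolding opt_Q_Qf Qf_def using gm Vm by measurable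
    have "G = {\<xi> \<in> space M. \<forall>l\<in>L. \<forall>s a b. a \<noteq> b \<longrightarrow>
        \<iota> \<le> opt_V P \<gamma> (g \<xi> l) s - opt_Q P \<gamma> (g \<xi> l) s a \<or> \<iota> \<le> opt_V P \<gamma> (g \<xi> l) s - opt_Q P \<gamma> (g \<xi> l) s b}"
      unfolding G_def using gap_char[OF ipos] by simp
    also have "\<dots> \<in> sets M" using finL by measurable
    finally show ?thesis .
  qed
  have incl: "space M - (\<Union>j\<in>I. E j) \<subseteq> G"
  proof
    fix \<xi> assume x: "\<xi> \<in> space M - (\<Union>j\<in>I. E j)"
    have "gap_condition P \<gamma> (g \<xi> l) \<iota>" if l: "l \<in> L" for l
      unfolding gap_condition_def
    proof (intro allI impI)
      fix s a assume a: "a \<noteq> opt_pol P \<gamma> (g \<xi> l) s"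
      show "\<iota> \<le> opt_V P \<gamma> (g \<xi> l) s - opt_Q P \<gamma> (g \<xi> l) s a"
      proof (rule ccontr)
        assume "\<not> ?thesis"
        then have lt: "opt_V P \<gamma> (g \<xi> l) s - opt_Q P \<gamma> (g \<xi> l) s a < \<iota>" by simp
        from K1[OF a lt] have "\<xi> \<in> E (l, s, a)" using x unfolding E_def \<kappa>_def by auto
        moreover have "(l, s, a) \<in> I" unfolding I_def using l a by auto
        ultimately show False using x by auto
      qed
    qed
    then show "\<xi> \<in> G" using x unfolding G_def by auto
  qed
  have UE: "(\<Union>j\<in>I. E j) \<in> sets M" using EI finI by blast
  have "measure M (\<Union>j\<in>I. E j) \<le> (\<Sum>j\<in>I. measure M (E j))"
    by (rule measure_UNION_le[OF finI]) (use EI in blast)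
  also have "\<dots> \<le> (\<Sum>j\<in>I. 2 * \<kappa> / \<omega>)" by (rule sum_mono) (use EI in blast)
  also have "\<dots> = real (card I) * (2 * \<kappa> / \<omega>)" by simp
  also have "\<dots> \<le> real (card L * CARD('s) * CARD('a)) * (2 * \<kappa> / \<omega>)"
  proof (rule mult_right_mono)
    have "card I = card L * (CARD('s) * card {a :: 'a. \<exists>b. b \<noteq> a})"
      unfolding I_def by (simp add: card_cartesian_product)
    also have "\<dots> \<le> card L * (CARD('s) * CARD('a))"
      by (intro mult_le_mono2 mult_le_mono2 card_mono) auto
    finally have "card I \<le> card L * CARD('s) * CARD('a)" by (simp add: mult.assoc)
    then show "real (card I) \<le> real (card L * CARD('s) * CARD('a))" by (simp only: of_nat_le_iff)
  qed (use ka assms(4) in simp)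
  also have "\<dots> = \<delta> / (15 * real CARD('a))"
    unfolding kaeq using assms(4) cardL S1 A1 by (simp add: field_simps power2_eq_square)
  also have "\<dots> \<le> \<delta> / 10" by (rule divide_left_mono) (use A1 assms(5) in linarith)+
  finally have mU: "measure M (\<Union>j\<in>I. E j) \<le> \<delta> / 10" .
  have "measure M (space M - (\<Union>j\<in>I. E j)) = measure M (space M) - measure M (\<Union>j\<in>I. E j)"
    by (rule M.finite_measure_Diff[OF sets.top UE]) (use UE sets.sets_into_space in blast)
  then have "measure M (space M - (\<Union>j\<in>I. E j)) \<ge> 1 - \<delta> / 10" using mU M.prob_space by simp
  moreover have "measure M (space M - (\<Union>j\<in>I. E j)) \<le> measure M G"
    by (rule M.finite_measure_mono[OF incl Gm])
  ultimately have "measure M G \<ge> 1 - \<delta> / 10" by simp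
  then show ?thesis unfolding G_def M_def \<iota>_def L_def g_def .
qed


end
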